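(* Let $p(y)$ be a probability distribution on $\mathcal{Y}$, $p(z\mid y)$ conditional distributions on $\mathcal{Z}$, $\phi:\mathcal{Y}\times\mathcal{Z}\to\Phi\subseteq\mathbb{R}^{D_\phi}$, and let $\gamma(y)=\mathbb{E}_{z\sim p(z\mid y)}[\phi(y,z)]$ be integrable as a function of $y$. For an integrable $f:\mathcal{Y}\times\Phi\to\mathbb{R}^{D_f}$ write $I(f)=\mathbb{E}_{y\sim p(y)}[f(y,\gamma(y))]$. Suppose an inner estimator $\mathcal{I}$ produces, for each $y\in\mathcal{Y}$, a random estimate $\hat\gamma_y\in\Phi$ of $\gamma(y)$ which is not exact, in the sense that for every $y$ the estimate $\hat\gamma_y$ has nonzero variance (so $\gamma(y)$ is not computed exactly). Then there does not exist an outer estimator $\mathcal{J}$ which, for every integrable $f$, maps a sample set $\hat\zeta=\{(y_1,\hat\gamma_{y_1}),\dots,(y_n,\hat\gamma_{y_n})\}$ (with the $\hat\gamma_{y_i}$ generated by $\mathcal{I}$) to an estimate $\psi(\hat\zeta,f)$ such that simultaneously (i) $\mathbb{E}[\psi(\hat\zeta,f)]=I(f)$ for every integrable $f$, and (ii) $\mathbb{E}_{y\sim p(y)}\big[\mathbb{E}[f(y,\hat\gamma_y)\mid y]\big]-\mathbb{E}[\psi(\hat\zeta,f)]\ge0$ for every integrable $f$. The same conclusion holds if the inequality in (ii) is replaced by $\le 0$.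
   Context: Condition (ii) says that combining the inner estimator with an exact outer expectation never yields a negatively (respectively, in the reversed version, positively) biased estimator for any $f$. The conclusion states that no general-purpose nested estimation scheme of this form can be unbiased for all integrable $f$. *)

theory Defs
  imports "HOL-Probability.Probability"
begin

definition gamma :: "('y \<Rightarrow> 'z measure) \<Rightarrow> ('y \<Rightarrow> 'z \<Rightarrow> real^'p) \<Rightarrow> 'y \<Rightarrow> real^'p" where
  "gamma Pz \<phi> y = (\<integral>z. \<phi> y z \<partial>Pz y)"

text \<open>Variance (total, i.e. trace of covariance) of a random vector with law N,
  as an extended nonnegative real (infinite variance allowed).\<close>
definition vec_variance :: "(real^'p) measure \<Rightarrow> ennreal" where
  "vec_variance N = (\<integral>\<^sup>+ x. ennreal ((norm (x - (\<integral>u. u \<partial>N)))\<^sup>2) \<partial>N)"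

definition nested_integrable ::
  "'y measure \<Rightarrow> ('y \<Rightarrow> (real^'p) measure) \<Rightarrow> ('y \<Rightarrow> real^'p) \<Rightarrow> ('y \<Rightarrow> real^'p \<Rightarrow> real^'k) \<Rightarrow> bool" where
  "nested_integrable M Q g f \<longleftrightarrow>
     (\<lambda>(y, x). f y x) \<in> borel_measurable (M \<Otimes>\<^sub>M borel) \<and>
     integrable M (\<lambda>y. f y (g y)) \<and>
     (\<forall>y\<in>space M. integrable (Q y) (f y)) \<and>
     integrable M (\<lambda>y. \<integral>x. f y x \<partial>Q y)"

text \<open>Law of the sample set zeta = {(y_i, hat gamma_{y_i})}_{i<n}: the y's are drawn
  jointly from D, and given the y's the inner estimates are drawn independently by the
  inner estimator, hat gamma_{y_i} ~ Q (y_i).\<close>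
definition sample_law ::
  "'y measure \<Rightarrow> ('y \<Rightarrow> (real^'p) measure) \<Rightarrow> nat \<Rightarrow> (nat \<Rightarrow> 'y) measure
     \<Rightarrow> ((nat \<Rightarrow> 'y) \<times> (nat \<Rightarrow> real^'p)) measure" where
  "sample_law M Q n D =
     D \<bind> (\<lambda>ys. distr (PiM {..<n} (\<lambda>i. Q (ys i)))
                      (PiM {..<n} (\<lambda>_. M) \<Otimes>\<^sub>M PiM {..<n} (\<lambda>_. (borel :: (real^'p) measure)))
                      (\<lambda>xs. (ys, xs)))"

text \<open>An outer estimator (n, D, psi) with the required properties (i) and (ii);
  s = 1 gives inequality >= 0 in (ii), s = -1 gives <= 0.\<close>
definition good_outer_estimator ::
  "real \<Rightarrow> 'y measure \<Rightarrow> ('y \<Rightarrow> (real^'p) measure) \<Rightarrow> ('y \<Rightarrow> real^'p) \<Rightarrow> nat \<Rightarrow> (nat \<Rightarrow> 'y) measure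
     \<Rightarrow> (((nat \<Rightarrow> 'y) \<times> (nat \<Rightarrow> real^'p)) \<Rightarrow> ('y \<Rightarrow> real^'p \<Rightarrow> real^'k) \<Rightarrow> real^'k) \<Rightarrow> bool" where
  "good_outer_estimator s M Q g n D \<psi> \<longleftrightarrow>
     prob_space D \<and> sets D = sets (PiM {..<n} (\<lambda>_. M)) \<and>
     (\<forall>f. (\<lambda>\<zeta>. \<psi> \<zeta> f) \<in> borel_measurable (sample_law M Q n D)) \<and>
     (\<forall>f. nested_integrable M Q g f \<longrightarrow>
          (\<integral>\<zeta>. \<psi> \<zeta> f \<partial>sample_law M Q n D) = (\<integral>y. f y (g y) \<partial>M)) \<and>
     (\<forall>f. nested_integrable M Q g f \<longrightarrow>
          0 \<le> s *\<^sub>R ((\<integral>y. (\<integral>x. f y x \<partial>Q y) \<partial>M) - (\<integral>\<zeta>. \<psi> \<zeta> f \<partial>sample_law M Q n D)))"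

end

theory Submission
  imports Defs
begin

lemma no_good:
  fixes M :: "'y measure"
    and Q :: "'y \<Rightarrow> (real^'p) measure"
    and g :: "'y \<Rightarrow> real^'p"
    and \<psi> :: "((nat \<Rightarrow> 'y) \<times> (nat \<Rightarrow> real^'p)) \<Rightarrow> ('y \<Rightarrow> real^'p \<Rightarrow> real^'k) \<Rightarrow> real^'k"
  assumes PM: "prob_space M"
    and gm[measurable]: "g \<in> borel_measurable M"
    and Qm[measurable]: "Q \<in> M \<rightarrow>\<^sub>M prob_algebra borel"
    and var: "\<forall>y\<in>space M. vec_variance (Q y) \<noteq> 0"
    and s: "s * s = 1"
    and G: "good_outer_estimator s M Q g n D \<psi>"
  shows False
proof -
  define c where "c y x = min 1 (norm (x - g y))" for y x
  define f :: "'y \<Rightarrow> real^'p \<Rightarrow> real^'k" where "f y x = (- s * c y x) *\<^sub>R 1" for y x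
  define h where "h y = (\<integral>x. c y x \<partial>Q y)" for y
  have Qsub[measurable]: "Q \<in> M \<rightarrow>\<^sub>M subprob_algebra borel"
    using Qm by (rule measurable_prob_algebraD)
  have Qy: "prob_space (Q y)" "sets (Q y) = sets borel" if "y \<in> space M" for y
    using measurable_space[OF Qm that] by (auto simp: space_prob_algebra)
  have cm[measurable]: "(\<lambda>(y, x). c y x) \<in> borel_measurable (M \<Otimes>\<^sub>M borel)"
    unfolding c_def by measurable
  have c01: "0 \<le> c y x" "c y x \<le> 1" for y x by (auto simp: c_def)
  have cy_meas: "c y \<in> borel_measurable (Q y)" if "y \<in> space M" for y
  proof -
    have "c y \<in> borel_measurable borel" unfolding c_def
      by (intro borel_measurable_continuous_onI continuous_intros)
    then show ?thesis by (subst measurable_cong_sets[OF Qy(2)[OF that] refl])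
  qed
  have cy_int: "integrable (Q y) (c y)" if "y \<in> space M" for y
    using prob_space.finite_measure[OF Qy(1)[OF that]] cy_meas[OF that] c01
    by (intro finite_measure.integrable_const_bound[where B=1]) auto
  have h_nn: "h y = enn2real (\<integral>\<^sup>+x. ennreal (c y x) \<partial>Q y)" if "y \<in> space M" for y
    unfolding h_def using integral_eq_nn_integral[OF cy_meas[OF that]] c01 by auto
  have hm[measurable]: "h \<in> borel_measurable M"
  proof -
    have "(\<lambda>y. \<integral>\<^sup>+x. ennreal (c y x) \<partial>Q y) \<in> borel_measurable M"
      by (rule nn_integral_measurable_subprob_algebra2[OF _ Qsub]) (use cm in measurable)
    then have "(\<lambda>y. enn2real (\<integral>\<^sup>+x. ennreal (c y x) \<partial>Q y)) \<in> borel_measurable M" by measurable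
    then show ?thesis by (rule measurable_cong[THEN iffD1, rotated]) (simp add: h_nn)
  qed
  have h01: "0 \<le> h y" "h y \<le> 1" if "y \<in> space M" for y
  proof -
    show "0 \<le> h y" unfolding h_def using c01 by (simp add: integral_nonneg)
    have "h y \<le> (\<integral>x. 1 \<partial>Q y)" unfolding h_def
      by (rule integral_mono[OF cy_int[OF that]]) (use c01 prob_space.finite_measure[OF Qy(1)[OF that]] in \<open>auto intro: finite_measure.integrable_const\<close>)
    then show "h y \<le> 1" using prob_space.prob_space[OF Qy(1)[OF that]] by simp
  qed
  have h_int: "integrable M h"
    using prob_space.finite_measure[OF PM] h01
    by (intro finite_measure.integrable_const_bound[where B=1]) auto
  have intf: "(\<integral>x. f y x \<partial>Q y) = (- s * h y) *\<^sub>R 1" if "y \<in> space M" for y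
    unfolding f_def h_def using cy_int[OF that] by simp
  have intM: "(\<integral>y. (\<integral>x. f y x \<partial>Q y) \<partial>M) = (\<integral>y. (- s * h y) *\<^sub>R (1::real^'k) \<partial>M)"
    by (rule Bochner_Integration.integral_cong[OF refl intf])
  have intI: "integrable M (\<lambda>y. (\<integral>x. f y x \<partial>Q y))"
    by (subst Bochner_Integration.integrable_cong[OF refl intf]) (use h_int in simp_all)
  have NI: "nested_integrable M Q g f"
    unfolding nested_integrable_def
  proof (intro conjI ballI)
    show "(\<lambda>(y, x). f y x) \<in> borel_measurable (M \<Otimes>\<^sub>M borel)"
      unfolding f_def c_def by measurable
    show "integrable M (\<lambda>y. f y (g y))" by (simp add: f_def c_def)
    show "integrable (Q y) (f y)" if "y \<in> space M" for y
      unfolding f_def using cy_int[OF that] by simp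
    show "integrable M (\<lambda>y. \<integral>x. f y x \<partial>Q y)"
      by (rule intI)
  qed
  from G NI have E: "(\<integral>\<zeta>. \<psi> \<zeta> f \<partial>sample_law M Q n D) = 0"
    and ineq: "0 \<le> s *\<^sub>R ((\<integral>y. (\<integral>x. f y x \<partial>Q y) \<partial>M) - (\<integral>\<zeta>. \<psi> \<zeta> f \<partial>sample_law M Q n D))"
  proof -
    have fg: "(\<lambda>y. f y (g y)) = (\<lambda>y. 0)" by (simp add: f_def c_def)
    have E0: "(\<integral>\<zeta>. \<psi> \<zeta> f \<partial>sample_law M Q n D) = (\<integral>y. f y (g y) \<partial>M)"
      and I0: "0 \<le> s *\<^sub>R ((\<integral>y. (\<integral>x. f y x \<partial>Q y) \<partial>M) - (\<integral>\<zeta>. \<psi> \<zeta> f \<partial>sample_law M Q n D))"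
      using G NI unfolding good_outer_estimator_def by blast+
    show "(\<integral>\<zeta>. \<psi> \<zeta> f \<partial>sample_law M Q n D) = 0" using E0 fg by simp
    show "0 \<le> s *\<^sub>R ((\<integral>y. (\<integral>x. f y x \<partial>Q y) \<partial>M) - (\<integral>\<zeta>. \<psi> \<zeta> f \<partial>sample_law M Q n D))"
      by (rule I0)
  qed
  have "s *\<^sub>R ((\<integral>y. (\<integral>x. f y x \<partial>Q y) \<partial>M) - (\<integral>\<zeta>. \<psi> \<zeta> f \<partial>sample_law M Q n D))
        = (- (\<integral>y. h y \<partial>M)) *\<^sub>R (1::real^'k)"
    unfolding E intM using s h_int by (simp add: algebra_simps)
  with ineq have "0 \<le> (- (\<integral>y. h y \<partial>M)) *\<^sub>R (1::real^'k)" by simp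
  then have "0 \<le> - (\<integral>y. h y \<partial>M)"
    by (simp add: less_eq_vec_def)
  moreover have "0 \<le> (\<integral>y. h y \<partial>M)" using h01 by (simp add: integral_nonneg)
  ultimately have "(\<integral>y. h y \<partial>M) = 0" by simp
  then have "AE y in M. h y = 0"
    using integral_nonneg_eq_0_iff_AE[OF h_int] h01 by auto
  then have "\<exists>y\<in>space M. h y = 0"
  proof (rule contrapos_pp)
    assume nh: "\<not> (\<exists>y\<in>space M. h y = 0)"
    show "\<not> (AE y in M. h y = 0)"
    proof
      assume a: "AE y in M. h y = 0"
      have "AE y in M. False"
        by (rule AE_mp[OF a]) (use nh in \<open>auto intro!: AE_I2\<close>)
      then show False using prob_space.AE_False[OF PM] by simp
    qed
  qed
  then obtain y where y: "y \<in> space M" "h y = 0" by blast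
  have "AE x in Q y. c y x = 0"
    using integral_nonneg_eq_0_iff_AE[OF cy_int[OF y(1)]] y(2) c01 unfolding h_def by auto
  then have AEx: "AE x in Q y. x = g y"
    by eventually_elim (simp add: c_def min_def split: if_splits)
  have mean: "(\<integral>u. u \<partial>Q y) = g y"
  proof -
    have mb: "(\<lambda>u. u) \<in> borel_measurable (Q y)" "(\<lambda>u. g y) \<in> borel_measurable (Q y)"
      by (subst measurable_cong_sets[OF Qy(2)[OF y(1)] refl], simp)+
    have "(\<integral>u. u \<partial>Q y) = (\<integral>u. g y \<partial>Q y)"
      by (rule integral_cong_AE[OF mb AEx])
    also have "\<dots> = g y" using prob_space.prob_space[OF Qy(1)[OF y(1)]] by simp
    finally show ?thesis .
  qed
  have "vec_variance (Q y) = (\<integral>\<^sup>+ x. 0 \<partial>Q y)"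
    unfolding vec_variance_def mean
    by (rule nn_integral_cong_AE) (use AEx in eventually_elim, simp)
  then show False using var y(1) by simp
qed

theorem theorem3:
  fixes M :: "'y measure"
    and Pz :: "'y \<Rightarrow> 'z measure"
    and \<phi> :: "'y \<Rightarrow> 'z \<Rightarrow> real^'p"
    and Q :: "'y \<Rightarrow> (real^'p) measure"
  assumes "prob_space M"
    and "\<forall>y\<in>space M. prob_space (Pz y)"
    and "\<forall>y\<in>space M. integrable (Pz y) (\<phi> y)"
    and "integrable M (gamma Pz \<phi>)"
    and "Q \<in> M \<rightarrow>\<^sub>M prob_algebra borel"
    and "\<forall>y\<in>space M. integrable (Q y) (\<lambda>x. x)"
    and "\<forall>y\<in>space M. vec_variance (Q y) \<noteq> 0"
  shows "\<not> (\<exists>n D (\<psi> :: ((nat \<Rightarrow> 'y) \<times> (nat \<Rightarrow> real^'p)) \<Rightarrow> ('y \<Rightarrow> real^'p \<Rightarrow> real^'k) \<Rightarrow> real^'k).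
               good_outer_estimator 1 M Q (gamma Pz \<phi>) n D \<psi>)
       \<and> \<not> (\<exists>n D (\<psi> :: ((nat \<Rightarrow> 'y) \<times> (nat \<Rightarrow> real^'p)) \<Rightarrow> ('y \<Rightarrow> real^'p \<Rightarrow> real^'k) \<Rightarrow> real^'k).
               good_outer_estimator (-1) M Q (gamma Pz \<phi>) n D \<psi>)"
proof -
  have gm: "gamma Pz \<phi> \<in> borel_measurable M" using assms(4) by auto
  show ?thesis
    using no_good[OF assms(1) gm assms(5) assms(7), of 1]
          no_good[OF assms(1) gm assms(5) assms(7), of "-1"]
    by auto
qed

end
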